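(* Let $K_t,K_r,M_r,N_t$ be positive integers with $N_t\le K_rM_r$. Consider $K_t$ transmitters with $N_t$ antennas each and $K_r$ receivers with $M_r$ antennas each, where $\mathbf{H}_{jk}\in\mathbb{C}^{M_r\times N_t}$ denotes the channel matrix from transmitter $k$ to receiver $j$, with all entries of all channel matrices i.i.d. zero-mean unit-variance circularly symmetric complex Gaussian. Let $\kappa_t$ be an integer with $0\le \kappa_t\le K_t-1$ satisfying \[ (K_t-1)N_t\le K_r(K_t-\kappa_t)M_r<K_tN_t, \] and let $d$ be a positive integer satisfying \[ d\le K_tN_t-K_r(K_t-\kappa_t)M_r . \] Then almost surely there exist precoders $\mathbf{V}_k\in\mathbb{C}^{N_t\times d}$, $k=1,\dots,K_t$, such that each $\mathbf{V}_k$ has full column rank $d$ and \[ \dim\Big(\mathcal{C}\big(\mathbf{H}_{j1}\mathbf{V}_1,\mathbf{H}_{j2}\mathbf{V}_2,\dots,\mathbf{H}_{jK_t}\mathbf{V}_{K_t}\big)\Big)\le\kappa_t d\qquad\text{for all } j=1,\dots,K_r . \]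
   Context: $\mathcal{C}(\mathbf{A}_1,\dots,\mathbf{A}_n)$ denotes the column space of the horizontally concatenated matrix $[\mathbf{A}_1\ \mathbf{A}_2\ \cdots\ \mathbf{A}_n]$. *)

theory Defs
  imports "HOL-Probability.Probability" "Jordan_Normal_Form.DL_Rank"
begin

definition cgauss :: "complex measure" where
  "cgauss = density lborel (\<lambda>z. ennreal (exp (- (cmod z)\<^sup>2) / pi))"

text \<open>Index set of all channel entries (j,k,m,n): receiver j, transmitter k, row m, column n (0-based).\<close>
definition chan_idx :: "nat \<Rightarrow> nat \<Rightarrow> nat \<Rightarrow> nat \<Rightarrow> (nat \<times> nat \<times> nat \<times> nat) set" where
  "chan_idx Kr Kt Mr Nt = {..<Kr} \<times> {..<Kt} \<times> {..<Mr} \<times> {..<Nt}"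

definition channel_measure :: "nat \<Rightarrow> nat \<Rightarrow> nat \<Rightarrow> nat \<Rightarrow> ((nat \<times> nat \<times> nat \<times> nat) \<Rightarrow> complex) measure" where
  "channel_measure Kr Kt Mr Nt = PiM (chan_idx Kr Kt Mr Nt) (\<lambda>_. cgauss)"

definition channel :: "nat \<Rightarrow> nat \<Rightarrow> ((nat \<times> nat \<times> nat \<times> nat) \<Rightarrow> complex) \<Rightarrow> nat \<Rightarrow> nat \<Rightarrow> complex mat" where
  "channel Mr Nt w j k = mat Mr Nt (\<lambda>(m, n). w (j, k, m, n))"

text \<open>Horizontal concatenation [B 0, B 1, ..., B (K-1)] of K matrices each with d columns.\<close>
definition hcat :: "nat \<Rightarrow> nat \<Rightarrow> (nat \<Rightarrow> 'a mat) \<Rightarrow> 'a mat" where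
  "hcat K d B = mat (dim_row (B 0)) (K * d) (\<lambda>(i, c). B (c div d) $$ (i, c mod d))"

end

theory Submission
  imports Defs "HOL-Library.Function_Algebras" "HOL-Computational_Algebra.Polynomial"
begin

inductive polyfun :: "'i set \<Rightarrow> (('i \<Rightarrow> complex) \<Rightarrow> complex) \<Rightarrow> bool" for I where
  pf_const: "polyfun I (\<lambda>_. c)"
| pf_var: "i \<in> I \<Longrightarrow> polyfun I (\<lambda>w. w i)"
| pf_add: "polyfun I f \<Longrightarrow> polyfun I g \<Longrightarrow> polyfun I (\<lambda>w. f w + g w)"
| pf_mult: "polyfun I f \<Longrightarrow> polyfun I g \<Longrightarrow> polyfun I (\<lambda>w. f w * g w)"

lemma pf_zero: "polyfun I 0" and pf_one: "polyfun I 1"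
  using pf_const[of I 0] pf_const[of I 1] by (simp_all add: zero_fun_def one_fun_def)

lemma pf_sum: "finite S \<Longrightarrow> (\<And>s. s \<in> S \<Longrightarrow> polyfun I (f s)) \<Longrightarrow> polyfun I (\<lambda>w. \<Sum>s\<in>S. f s w)"
  by (induction S rule: finite_induct) (auto intro: polyfun.intros pf_const)

lemma pf_prod: "finite S \<Longrightarrow> (\<And>s. s \<in> S \<Longrightarrow> polyfun I (f s)) \<Longrightarrow> polyfun I (\<lambda>w. \<Prod>s\<in>S. f s w)"
  by (induction S rule: finite_induct) (auto intro: polyfun.intros)

lemma pf_sumf: "finite S \<Longrightarrow> (\<And>s. s \<in> S \<Longrightarrow> polyfun I (f s)) \<Longrightarrow> polyfun I (\<Sum>s\<in>S. f s)"
proof (induction S rule: finite_induct)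
  case empty show ?case by (simp add: pf_const zero_fun_def)
next
  case (insert x F)
  have "polyfun I (\<lambda>w. f x w + (\<Sum>s\<in>F. f s) w)"
    using insert by (intro pf_add) auto
  then show ?case using insert by (simp add: plus_fun_def)
qed

lemma pf_indep: "polyfun I f \<Longrightarrow> i \<notin> I \<Longrightarrow> f (w(i:=z)) = f w"
  by (induction rule: polyfun.induct) auto

lemma pf_local: "polyfun I f \<Longrightarrow> (\<And>i. i \<in> I \<Longrightarrow> w i = w' i) \<Longrightarrow> f w = f w'"
  by (induction rule: polyfun.induct) auto

lemma pf_mono: "polyfun I f \<Longrightarrow> I \<subseteq> J \<Longrightarrow> polyfun J f"
  by (induction rule: polyfun.induct) (auto intro: polyfun.intros)

lemma pf_empty: "polyfun {} f \<Longrightarrow> f w = f w'"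
  using pf_local by fastforce

lemma poly_fun_apply: "poly p x w = poly (map_poly (\<lambda>c. c w) p) (x w)"
  by (induction p) (auto simp: map_poly_pCons)

lemma pf_decomp:
  assumes "polyfun (insert i J) f" "i \<notin> J"
  shows "\<exists>p. (\<forall>n. polyfun J (coeff p n)) \<and> f = poly p (\<lambda>w. w i)"
  using assms(1)
proof (induction rule: polyfun.induct)
  case (pf_const c)
  show ?case by (rule exI[of _ "[:(\<lambda>_. c):]"]) (auto simp: coeff_pCons split: nat.splits intro: polyfun.intros pf_zero)
next
  case (pf_var j)
  show ?case
  proof (cases "j = i")
    case True
    show ?thesis by (rule exI[of _ "[:0, 1:]"]) (auto simp: True coeff_pCons split: nat.splits intro: pf_zero pf_one)
  next
    case False
    with pf_var have "j \<in> J" by auto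
    then show ?thesis by (intro exI[of _ "[:(\<lambda>w. w j):]"]) (auto simp: coeff_pCons split: nat.splits intro: polyfun.intros pf_zero)
  qed
next
  case (pf_add f g)
  then obtain p q where p: "\<forall>n. polyfun J (coeff p n)" "f = poly p (\<lambda>w. w i)"
    and q: "\<forall>n. polyfun J (coeff q n)" "g = poly q (\<lambda>w. w i)" by blast
  show ?case
    by (intro exI[of _ "p + q"]) (auto simp: p q intro: polyfun.intros)
next
  case (pf_mult f g)
  then obtain p q where p: "\<forall>n. polyfun J (coeff p n)" "f = poly p (\<lambda>w. w i)"
    and q: "\<forall>n. polyfun J (coeff q n)" "g = poly q (\<lambda>w. w i)" by blast
  have "polyfun J (coeff (p * q) n)" for n
  proof -
    have "polyfun J (coeff p k * coeff q (n - k))" for k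
    proof -
      have "polyfun J (\<lambda>w. coeff p k w * coeff q (n-k) w)" by (rule polyfun.pf_mult) (use p q in auto)
      then show ?thesis by (simp add: times_fun_def)
    qed
    then show ?thesis unfolding coeff_mult by (intro pf_sumf) auto
  qed
  then show ?case
    by (intro exI[of _ "p * q"]) (auto simp: p q)
qed

lemma sets_cgauss[measurable_cong, simp]: "sets cgauss = sets borel"
  by (simp add: cgauss_def)
lemma space_cgauss[simp]: "space cgauss = UNIV"
  by (simp add: cgauss_def)

lemma sf_cgauss: "sigma_finite_measure cgauss"
  unfolding cgauss_def
  by (subst sigma_finite_measure.sigma_finite_iff_density_finite[OF sigma_finite_lborel]) auto

interpretation cg: product_sigma_finite "\<lambda>_::'i. cgauss"
  unfolding product_sigma_finite_def using sf_cgauss by simp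

lemma AE_cgauss_finite: "finite A \<Longrightarrow> AE z in cgauss. z \<notin> A"
proof -
  assume "finite A"
  then have "AE z in lborel. z \<notin> A"
    by (intro AE_not_in countable_imp_null_set_lborel countable_finite)
  then have "AE z in lborel. 0 < ennreal (exp (- (cmod z)\<^sup>2) / pi) \<longrightarrow> z \<notin> A"
    by (rule AE_mp) (intro AE_I2, simp)
  then show ?thesis unfolding cgauss_def by (subst AE_density) simp_all
qed

lemma pf_measurable: "polyfun I f \<Longrightarrow> f \<in> borel_measurable (PiM I (\<lambda>_. cgauss))"
proof (induction rule: polyfun.induct)
  case (pf_var i)
  then show ?case using measurable_component_singleton[of i I "\<lambda>_. cgauss"]
    unfolding measurable_cong_sets[OF refl sets_cgauss] by blast
next
  case (pf_const c) show ?case by (rule measurable_const) simp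
next
  case (pf_add f g) then show ?case by (intro borel_measurable_add) auto
next
  case (pf_mult f g) then show ?case by (intro borel_measurable_times) auto
qed

lemma pf_AE:
  fixes f :: "('i \<Rightarrow> complex) \<Rightarrow> complex"
  assumes "finite I" "polyfun I f" "f w0 \<noteq> 0"
  shows "AE w in PiM I (\<lambda>_. cgauss). f w \<noteq> 0"
  using assms
proof (induction I arbitrary: f w0 rule: finite_induct)
  case empty
  then show ?case using pf_empty[of f] by (intro AE_I2) metis
next
  case (insert i J)
  let ?M = "\<lambda>_::'i. cgauss"
  from pf_decomp[OF insert(4) insert(2)] obtain p where
    p: "\<And>n. polyfun J (coeff p n)" and fp: "f = poly p (\<lambda>w. w i)" by blast
  have "poly (map_poly (\<lambda>c. c w0) p) (w0 i) \<noteq> 0"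
    using insert(5) fp poly_fun_apply[of p "\<lambda>w. w i" w0] by simp
  then have "map_poly (\<lambda>c. c w0) p \<noteq> 0" by auto
  then obtain n where "coeff (map_poly (\<lambda>c. c w0) p) n \<noteq> 0"
    by (meson leading_coeff_neq_0)
  then have cn: "coeff p n w0 \<noteq> 0" by (simp add: coeff_map_poly zero_fun_def)
  have IH: "AE x in PiM J ?M. coeff p n x \<noteq> 0"
    by (rule insert(3)[OF p cn])
  interpret pf: pair_sigma_finite "PiM J ?M" "PiM {i} ?M"
  proof -
    interpret A: finite_product_sigma_finite ?M J by standard fact
    interpret B: finite_product_sigma_finite ?M "{i}" by standard simp
    show "pair_sigma_finite (PiM J ?M) (PiM {i} ?M)" by standard
  qed
  have fmeas: "f \<in> borel_measurable (PiM (J \<union> {i}) ?M)"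
    using pf_measurable[OF insert(4)] by simp
  have ae_sing: "AE y in PiM {i} ?M. poly q (y i) \<noteq> 0" if "q \<noteq> 0" for q
  proof -
    have "AE z in cgauss. poly q z \<noteq> 0"
      using AE_cgauss_finite[OF poly_roots_finite[OF that]] by simp
    then have "AE z in distr (PiM {i} ?M) cgauss (\<lambda>x. x i). poly q z \<noteq> 0"
      by (subst cg.distr_singleton) assumption
    moreover have "{x. poly q x \<noteq> 0} \<in> sets borel"
    proof -
      have "closed {x. poly q x = 0}"
        using poly_roots_finite[OF that] by (rule finite_imp_closed)
      then have "- {x. poly q x = 0} \<in> sets borel" by (intro borel_open) auto
      moreover have "- {x. poly q x = 0} = {x. poly q x \<noteq> 0}" by auto
      ultimately show ?thesis by simp
    qed
    ultimately show ?thesis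
      by (subst (asm) AE_distr_iff) (auto intro!: measurable_component_singleton)
  qed
  have AEx: "AE x in PiM J ?M. AE y in PiM {i} ?M. f (merge J {i} (x, y)) \<noteq> 0"
  proof (rule eventually_mono[OF IH])
    fix x assume cx: "coeff p n x \<noteq> 0"
    let ?q = "map_poly (\<lambda>c. c x) p"
    have qnz: "?q \<noteq> 0"
      using cx by (metis coeff_0 coeff_map_poly zero_fun_def)
    show "AE y in PiM {i} ?M. f (merge J {i} (x, y)) \<noteq> 0"
    proof (rule eventually_mono[OF ae_sing[OF qnz]])
      fix y assume "poly ?q (y i) \<noteq> 0"
      moreover have "map_poly (\<lambda>c. c (merge J {i} (x, y))) p = ?q"
      proof (rule poly_eqI)
        fix k
        have "coeff p k (merge J {i} (x, y)) = coeff p k x"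
          by (rule pf_local[OF p]) (auto simp: merge_def)
        then show "coeff (map_poly (\<lambda>c. c (merge J {i} (x, y))) p) k = coeff ?q k"
          by (simp add: coeff_map_poly zero_fun_def)
      qed
      moreover have "merge J {i} (x, y) i = y i" using insert(2) by (simp add: merge_def)
      ultimately show "f (merge J {i} (x, y)) \<noteq> 0"
        using poly_fun_apply[of p "\<lambda>w. w i" "merge J {i} (x, y)"] fp by simp
    qed
  qed
  have "AE z in PiM J ?M \<Otimes>\<^sub>M PiM {i} ?M. f (merge J {i} z) \<noteq> 0"
  proof (rule pf.AE_pair_measure[where P="\<lambda>z. f (merge J {i} z) \<noteq> 0"])
    have g: "(\<lambda>z. f (merge J {i} z)) \<in> borel_measurable (PiM J ?M \<Otimes>\<^sub>M PiM {i} ?M)"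
      using measurable_comp[OF measurable_merge fmeas] by (simp add: comp_def)
    have "(\<lambda>z. f (merge J {i} z)) -` (- {0}) \<inter> space (PiM J ?M \<Otimes>\<^sub>M PiM {i} ?M) \<in> sets (PiM J ?M \<Otimes>\<^sub>M PiM {i} ?M)"
      by (rule measurable_sets[OF g]) (intro borel_open, auto)
    moreover have "(\<lambda>z. f (merge J {i} z)) -` (- {0}) \<inter> space (PiM J ?M \<Otimes>\<^sub>M PiM {i} ?M) = {z \<in> space (PiM J ?M \<Otimes>\<^sub>M PiM {i} ?M). f (merge J {i} z) \<noteq> 0}"
      by auto
    ultimately show "{z \<in> space (PiM J ?M \<Otimes>\<^sub>M PiM {i} ?M). f (merge J {i} z) \<noteq> 0} \<in> sets (PiM J ?M \<Otimes>\<^sub>M PiM {i} ?M)" by simp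
  qed (use AEx in simp)
  then have "AE w in distr (PiM J ?M \<Otimes>\<^sub>M PiM {i} ?M) (PiM (J \<union> {i}) ?M) (merge J {i}). f w \<noteq> 0"
  proof (subst AE_distr_iff)
    show "merge J {i} \<in> measurable (PiM J ?M \<Otimes>\<^sub>M PiM {i} ?M) (PiM (J \<union> {i}) ?M)"
      by (rule measurable_merge)
    have "f -` (- {0}) \<inter> space (PiM (J \<union> {i}) ?M) \<in> sets (PiM (J \<union> {i}) ?M)"
      by (rule measurable_sets[OF fmeas]) (intro borel_open, auto)
    moreover have "f -` (- {0}) \<inter> space (PiM (J \<union> {i}) ?M) = {w \<in> space (PiM (J \<union> {i}) ?M). f w \<noteq> 0}" by auto
    ultimately show "{w \<in> space (PiM (J \<union> {i}) ?M). f w \<noteq> 0} \<in> sets (PiM (J \<union> {i}) ?M)" by simp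
  qed assumption
  moreover have "distr (PiM J ?M \<Otimes>\<^sub>M PiM {i} ?M) (PiM (J \<union> {i}) ?M) (merge J {i}) = PiM (J \<union> {i}) ?M"
    by (rule cg.distr_merge) (use insert(1,2) in auto)
  ultimately have "AE w in PiM (J \<union> {i}) ?M. f w \<noteq> 0" by (simp only:)
  moreover have "J \<union> {i} = insert i J" by auto
  ultimately show ?case by (simp only:)
qed

lemma sum_blocks: "(\<Sum>t<a*b. f t) = (\<Sum>k<a. \<Sum>s<b. f (k*b + s :: nat))"
proof (induction a)
  case 0 then show ?case by simp
next
  case (Suc a)
  have "(\<Sum>t<Suc a*b. f t) = (\<Sum>t\<in>{0..<a*b + b}. f t)"
    by (simp add: atLeast0LessThan add.commute)
  also have "\<dots> = (\<Sum>t\<in>{0..<a*b}. f t) + (\<Sum>t\<in>{a*b..<a*b + b}. f t)"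
    by (rule sum.atLeastLessThan_concat[symmetric]) auto
  also have "(\<Sum>t\<in>{a*b..<a*b + b}. f t) = (\<Sum>s\<in>{0..<b}. f (s + a*b))"
    using sum.shift_bounds_nat_ivl[of f 0 "a*b" b] by (simp add: add.commute)
  finally show ?case using Suc by (simp add: atLeast0LessThan add.commute)
qed

lemma (in vec_space) rank_le_colspace:
  assumes A: "A \<in> carrier_mat n na" and B: "B \<in> carrier_mat n nb"
  and cl: "\<And>q. q < na \<Longrightarrow> \<exists>x\<in>carrier_vec nb. B *\<^sub>v x = col A q"
  shows "rank A \<le> rank B"
proof -
  have cB: "set (cols B) \<subseteq> carrier_vec n" using B cols_dim by blast
  have sub: "set (cols A) \<subseteq> span (set (cols B))"
  proof
    fix v assume "v \<in> set (cols A)"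
    then obtain q where q: "q < dim_col A" "v = col A q" by (metis cols_length cols_nth in_set_conv_nth)
    then obtain x where x: "x \<in> carrier_vec nb" "B *\<^sub>v x = col A q" using cl A by auto
    then have "v \<in> col_space B" unfolding col_space_eq[OF B] using q A B x by auto
    then show "v \<in> span (set (cols B))" unfolding col_space_def .
  qed
  let ?W = "span (set (cols B))"
  have vsW: "vectorspace class_ring (vs ?W)" using span_is_subspace[THEN subspace_is_vs, OF cB] by auto
  have smW: "submodule class_ring ?W V" using cB by (simp add: span_is_submodule)
  have ss: "subspace class_ring (span (set (cols A))) (vs ?W)"
    using vectorspace.span_is_subspace[OF vsW, of "set (cols A)", unfolded span_li_not_depend(1)[OF sub smW]] sub by auto
  have fin_dim: "vectorspace.fin_dim class_ring (vs ?W)"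
       "vectorspace.fin_dim class_ring (vs ?W\<lparr>carrier := span (set (cols A))\<rparr>)"
    using fin_dim_span_cols A B by auto
  show ?thesis unfolding rank_def using vectorspace.subspace_dim[OF vsW ss fin_dim(1) fin_dim(2)] by simp
qed

lemma (in vec_space) rank_full:
  assumes A: "A \<in> carrier_mat n nc"
  and ker: "\<And>v. v \<in> carrier_vec nc \<Longrightarrow> A *\<^sub>v v = 0\<^sub>v n \<Longrightarrow> v = 0\<^sub>v nc"
  shows "rank A = nc"
proof -
  have dist: "distinct (cols A)"
  proof (rule ccontr)
    assume "\<not> distinct (cols A)"
    then obtain i j where ij: "i < nc" "j < nc" "i \<noteq> j" "cols A ! i = cols A ! j"
      using A by (metis cols_length distinct_conv_nth carrier_matD(2))
    define v :: "'a vec" where "v = unit_vec nc i - unit_vec nc j"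
    have vc: "v \<in> carrier_vec nc" unfolding v_def by auto
    have "A *\<^sub>v v = 0\<^sub>v n"
    proof (rule eq_vecI)
      fix r assume r: "r < dim_vec (0\<^sub>v n)"
      have "col A i $ r = col A j $ r" using ij A by (metis cols_nth carrier_matD(2))
      then have e: "A $$ (r, i) = A $$ (r, j)" using r ij A by (metis carrier_matD(1,2) index_col index_zero_vec(2))
      have "(A *\<^sub>v v) $ r = row A r \<bullet> v" using r A by auto
      also have "\<dots> = (\<Sum>c<nc. A $$ (r, c) * v $ c)"
        unfolding scalar_prod_def using r A vc by (auto simp: atLeast0LessThan intro!: sum.cong)
      also have "\<dots> = (\<Sum>c<nc. A $$ (r, c) * ((if c = i then 1 else 0) - (if c = j then 1 else 0)))"
        unfolding v_def by (intro sum.cong) (auto simp: unit_vec_def)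
      also have "\<dots> = (\<Sum>c<nc. (if c = i then A $$ (r, c) else 0)) - (\<Sum>c<nc. (if c = j then A $$ (r, c) else 0))"
        by (subst sum_subtractf[symmetric]) (rule sum.cong, auto)
      also have "\<dots> = A $$ (r, i) - A $$ (r, j)"
        using ij by simp
      finally show "(A *\<^sub>v v) $ r = 0\<^sub>v n $ r" using e r by simp
    qed (use A in auto)
    moreover have "v \<noteq> 0\<^sub>v nc"
    proof
      assume "v = 0\<^sub>v nc"
      then have "v $ i = 0" using ij by simp
      then show False unfolding v_def using ij by simp
    qed
    ultimately show False using ker vc by blast
  qed
  have "lin_indpt (set (cols A))"
  proof
    assume "lin_dep (set (cols A))"
    then obtain v where "v \<in> carrier_vec nc" "v \<noteq> 0\<^sub>v nc" "A *\<^sub>v v = 0\<^sub>v n"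
      using lin_depE[OF A _ dist] by blast
    then show False using ker by blast
  qed
  then show ?thesis using lin_indpt_full_rank[OF A dist] by blast
qed

lemma pf_det:
  assumes F: "\<And>w. F w \<in> carrier_mat n n"
  and e: "\<And>a b. a < n \<Longrightarrow> b < n \<Longrightarrow> polyfun I (\<lambda>w. F w $$ (a, b))"
  shows "polyfun I (\<lambda>w. det (F w))"
proof -
  have "det (F w) = (\<Sum>p\<in>{p. p permutes {0..<n}}. signof p * (\<Prod>i\<in>{0..<n}. F w $$ (i, p i)))" for w
    using F[of w] unfolding det_def by auto
  moreover have "polyfun I (\<lambda>w. \<Sum>p\<in>{p. p permutes {0..<n}}. signof p * (\<Prod>i\<in>{0..<n}. F w $$ (i, p i)))"
  proof (intro pf_sum)
    show "finite {p. p permutes {0..<n}}" by (simp add: finite_permutations)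
    fix p assume "p \<in> {p. p permutes {0..<n}}"
    then have p: "p permutes {0..<n}" by simp
    show "polyfun I (\<lambda>w. signof p * (\<Prod>i\<in>{0..<n}. F w $$ (i, p i)))"
    proof (intro pf_mult pf_const pf_prod)
      fix i assume "i \<in> {0..<n}"
      then show "polyfun I (\<lambda>w. F w $$ (i, p i))" using e permutes_in_image[OF p] by auto
    qed simp
  qed
  ultimately show ?thesis by simp
qed

lemma mv_index: "A \<in> carrier_mat nr nc \<Longrightarrow> v \<in> carrier_vec nc \<Longrightarrow> r < nr \<Longrightarrow>
   (A *\<^sub>v v) $ r = (\<Sum>c<nc. A $$ (r, c) * v $ c)"
  by (auto simp: scalar_prod_def atLeast0LessThan intro!: sum.cong)

lemma lagrange_sum:
  fixes x c :: "nat \<Rightarrow> complex"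
  assumes h: "\<And>l. l < m \<Longrightarrow> (\<Sum>k\<in>K. x k ^ l * c k) = 0" and dL: "degree L < m"
  shows "(\<Sum>k\<in>K. poly L (x k) * c k) = 0"
proof -
  have "(\<Sum>k\<in>K. poly L (x k) * c k) = (\<Sum>k\<in>K. \<Sum>l\<le>degree L. coeff L l * (x k ^ l * c k))"
    by (simp add: poly_altdef sum_distrib_right mult.assoc)
  also have "\<dots> = (\<Sum>l\<le>degree L. coeff L l * (\<Sum>k\<in>K. x k ^ l * c k))"
    by (subst sum.swap) (simp add: sum_distrib_left)
  also have "\<dots> = 0" using h dL by (intro sum.neutral) auto
  finally show ?thesis .
qed

definition lag :: "nat set \<Rightarrow> nat \<Rightarrow> (nat \<Rightarrow> complex) \<Rightarrow> complex poly" where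
  "lag T k1 x = (\<Prod>k\<in>T-{k1}. [:- x k, 1:])"

lemma lag_nz: "finite T \<Longrightarrow> inj_on x T \<Longrightarrow> k1 \<in> T \<Longrightarrow> poly (lag T k1 x) (x k1) \<noteq> 0"
  unfolding lag_def poly_prod by (auto simp: inj_on_def)

lemma lag_z: "finite T \<Longrightarrow> k \<in> T - {k1} \<Longrightarrow> poly (lag T k1 x) (x k) = 0"
  unfolding lag_def poly_prod by (rule prod_zero) auto

lemma lag_deg: "finite T \<Longrightarrow> k1 \<in> T \<Longrightarrow> degree (lag T k1 x) = card T - 1"
  unfolding lag_def by (subst degree_prod_eq_sum_degree) auto

lemma lagrange_elim:
  fixes x c :: "nat \<Rightarrow> complex"
  assumes h: "\<And>l. l < m \<Longrightarrow> (\<Sum>k\<in>K. x k ^ l * c k) = 0"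
    and T: "finite T" "k1 \<in> T" "card T \<le> m" "T \<subseteq> K" "finite K" "inj_on x T"
  shows "poly (lag T k1 x) (x k1) * c k1 + (\<Sum>k\<in>K-T. poly (lag T k1 x) (x k) * c k) = 0"
proof -
  have "card T > 0" using T(1,2) card_gt_0_iff by blast
  then have deg: "degree (lag T k1 x) < m" using lag_deg[OF T(1,2), of x] T(3) by linarith
  have "0 = (\<Sum>k\<in>K. poly (lag T k1 x) (x k) * c k)" using lagrange_sum[OF h deg] by simp
  also have "\<dots> = (\<Sum>k\<in>T. poly (lag T k1 x) (x k) * c k) + (\<Sum>k\<in>K-T. poly (lag T k1 x) (x k) * c k)"
    using sum.subset_diff[OF T(4) T(5)] by (simp add: add.commute)
  also have "(\<Sum>k\<in>T. poly (lag T k1 x) (x k) * c k) = poly (lag T k1 x) (x k1) * c k1"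
    using T lag_z[OF T(1)] by (subst sum.remove[of _ k1]) (auto intro!: sum.neutral)
  finally show ?thesis by simp
qed

lemma gram_real_nz:
  fixes A :: "complex mat"
  assumes A: "A \<in> carrier_mat nr nc"
    and re: "\<And>r c. r < nr \<Longrightarrow> c < nc \<Longrightarrow> cnj (A $$ (r, c)) = A $$ (r, c)"
    and inj: "\<And>v. v \<in> carrier_vec nc \<Longrightarrow> A *\<^sub>v v = 0\<^sub>v nr \<Longrightarrow> v = 0\<^sub>v nc"
  shows "det (transpose_mat A * A) \<noteq> 0"
proof
  assume "det (transpose_mat A * A) = 0"
  moreover have G: "transpose_mat A * A \<in> carrier_mat nc nc" using A by auto
  ultimately obtain v where v: "v \<in> carrier_vec nc" "v \<noteq> 0\<^sub>v nc" "(transpose_mat A * A) *\<^sub>v v = 0\<^sub>v nc"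
    using det_0_iff_vec_prod_zero[OF G] by blast
  define y where "y = A *\<^sub>v v"
  have yc: "y \<in> carrier_vec nr" using A v unfolding y_def by auto
  have Aty: "transpose_mat A *\<^sub>v y = 0\<^sub>v nc" using v A unfolding y_def by simp
  have yr: "y $ r = (\<Sum>c<nc. A $$ (r, c) * v $ c)" if "r < nr" for r
    unfolding y_def by (rule mv_index[OF A v(1) that])
  have "(\<Sum>r<nr. cnj (y $ r) * y $ r) = (\<Sum>r<nr. \<Sum>c<nc. A $$ (r, c) * cnj (v $ c) * y $ r)"
    using re by (intro sum.cong refl) (auto simp: yr sum_distrib_right)
  also have "\<dots> = (\<Sum>c<nc. cnj (v $ c) * (\<Sum>r<nr. A $$ (r, c) * y $ r))"
    by (subst sum.swap) (auto simp: sum_distrib_left mult_ac)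
  also have "\<dots> = (\<Sum>c<nc. cnj (v $ c) * (transpose_mat A *\<^sub>v y) $ c)"
  proof (intro sum.cong refl)
    fix c assume c: "c \<in> {..<nc}"
    have "(transpose_mat A *\<^sub>v y) $ c = (\<Sum>r<nr. transpose_mat A $$ (c, r) * y $ r)"
      using mv_index[of "transpose_mat A" nc nr y c] A yc c by auto
    also have "\<dots> = (\<Sum>r<nr. A $$ (r, c) * y $ r)" using A c by (intro sum.cong) auto
    finally show "cnj (v $ c) * (\<Sum>r<nr. A $$ (r, c) * y $ r) = cnj (v $ c) * (transpose_mat A *\<^sub>v y) $ c" by simp
  qed
  also have "\<dots> = 0" using Aty by simp
  finally have s0: "(\<Sum>r<nr. cnj (y $ r) * y $ r) = 0" .
  have "complex_of_real (\<Sum>r<nr. (cmod (y $ r))\<^sup>2) = (\<Sum>r<nr. cnj (y $ r) * y $ r)"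
    unfolding of_real_sum by (intro sum.cong refl) (simp add: complex_norm_square mult.commute del: of_real_power)
  then have "complex_of_real (\<Sum>r<nr. (cmod (y $ r))\<^sup>2) = 0" using s0 by (rule trans)
  then have "(\<Sum>r<nr. (cmod (y $ r))\<^sup>2) = 0" by (rule of_real_eq_0_iff[THEN iffD1])
  then have "\<forall>r\<in>{..<nr}. (cmod (y $ r))\<^sup>2 = 0" by (subst (asm) sum_nonneg_eq_0_iff) auto
  then have "y = 0\<^sub>v nr" using yc by (intro eq_vecI) auto
  then show False using inj v unfolding y_def by blast
qed

lemma kernel_vecs:
  fixes A :: "'a::field mat"
  assumes A: "A \<in> carrier_mat nr nc" and dd: "nr + d \<le> nc"
  shows "\<exists>b. (\<forall>c<d. b c \<in> carrier_vec nc \<and> A *\<^sub>v b c = 0\<^sub>v nr) \<and>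
     (\<forall>\<alpha>. (\<forall>t<nc. (\<Sum>c<d. \<alpha> c * b c $ t) = 0) \<longrightarrow> (\<forall>c<d. \<alpha> c = 0))"
proof -
  obtain C where gj: "gauss_jordan_single A = C" by auto
  note G = gauss_jordan_single[OF A gj]
  have C: "C \<in> carrier_mat nr nc" and ref: "row_echelon_form C" using G by auto
  from ref obtain f where pf: "pivot_fun C f nc" unfolding row_echelon_form_def using C by auto
  define pp where "pp = pivot_positions C"
  have spp: "set pp = {(i, f i) | i. i < nr \<and> f i \<noteq> nc}" using pivot_positions(1)[OF C pf] pp_def by simp
  have "snd ` set pp \<subseteq> f ` {..<nr}" unfolding spp by auto
  then have cpp: "card (snd ` set pp) \<le> nr" by (metis card_image_le card_lessThan finite_lessThan le_trans card_mono finite_imageI)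
  define NP where "NP = {..<nc} - snd ` set pp"
  have "card NP \<ge> nc - nr" unfolding NP_def using cpp diff_card_le_card_Diff[of "snd ` set pp" "{..<nc}"] by auto
  then have "d \<le> card NP" using dd by auto
  then obtain S where S: "S \<subseteq> NP" "card S = d" by (metis obtain_subset_with_card_n)
  have fS: "finite S" using S NP_def by (meson finite_Diff finite_lessThan finite_subset)
  obtain g where g: "bij_betw g {0..<card S} S" using ex_bij_betw_nat_finite[OF fS] by blast
  have gNP: "g c < nc \<and> g c \<notin> snd ` set pp" if "c < d" for c
  proof -
    have "g c \<in> S" using g S that unfolding bij_betw_def by auto
    then show ?thesis using S unfolding NP_def by blast
  qed
  have ginj: "g c = g c' \<Longrightarrow> c < d \<Longrightarrow> c' < d \<Longrightarrow> c = c'" for c c'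
    using g S unfolding bij_betw_def inj_on_def by auto
  define b where "b c = non_pivot_base C pp (g c)" for c
  note npb = non_pivot_base[OF ref C, folded pp_def]
  have b1: "b c \<in> carrier_vec nc \<and> A *\<^sub>v b c = 0\<^sub>v nr" if "c < d" for c
    using npb(1,3)[OF gNP[OF that, THEN conjunct1] gNP[OF that, THEN conjunct2]] G(1) b_def by auto
  have b2: "b c $ g c' = (if c = c' then 1 else 0)" if "c < d" "c' < d" for c c'
    using npb(2,4)[OF gNP[OF that(1), THEN conjunct1] gNP[OF that(1), THEN conjunct2]]
      gNP[OF that(2)] ginj[OF _ that] b_def by auto
  show ?thesis
  proof (intro exI conjI allI impI)
    fix c assume "c < d" then show "b c \<in> carrier_vec nc" "A *\<^sub>v b c = 0\<^sub>v nr" using b1 by auto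
  next
    fix \<alpha> c assume h: "\<forall>t<nc. (\<Sum>c<d. \<alpha> c * b c $ t) = 0" and c: "c < d"
    have "0 = (\<Sum>c'<d. \<alpha> c' * b c' $ g c)" using h gNP[OF c] by auto
    also have "\<dots> = (\<Sum>c'<d. if c' = c then \<alpha> c' else 0)" using b2 c by (intro sum.cong) auto
    also have "\<dots> = \<alpha> c" using c by simp
    finally show "\<alpha> c = 0" by simp
  qed
qed

lemma mm_index: "A \<in> carrier_mat nr n \<Longrightarrow> B \<in> carrier_mat n nc \<Longrightarrow> i < nr \<Longrightarrow> j < nc \<Longrightarrow>
  (A * B) $$ (i, j) = (\<Sum>k<n. A $$ (i, k) * B $$ (k, j))"
  by (auto simp: scalar_prod_def atLeast0LessThan intro!: sum.cong)

lemma mult_zero_vec_right: "A \<in> carrier_mat nr nc \<Longrightarrow> A *\<^sub>v 0\<^sub>v nc = 0\<^sub>v nr"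
  by (intro eq_vecI) (auto simp: scalar_prod_def)

lemma idx_split: fixes j Kr i Mr l :: nat shows "j < Kr \<Longrightarrow> i < Mr \<Longrightarrow> (l * (Kr*Mr) + (j * Mr + i)) div (Kr*Mr) = l \<and>
   (l * (Kr*Mr) + (j * Mr + i)) mod (Kr*Mr) = j * Mr + i \<and> (j * Mr + i) div Mr = j \<and> (j * Mr + i) mod Mr = i"
proof -
  assume a: "j < Kr" "i < Mr"
  have "j * Mr + i < Suc j * Mr" using a by simp
  also have "\<dots> \<le> Kr * Mr" using a by (intro mult_le_mono1) simp
  finally have lt: "j * Mr + i < Kr * Mr" .
  then show ?thesis using a by auto
qed

lemma idx_split2: fixes s Nt k :: nat shows "s < Nt \<Longrightarrow> (k * Nt + s) div Nt = k \<and> (k * Nt + s) mod Nt = s"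
  by auto

locale prob =
  fixes Kt Kr Mr Nt \<kappa> d :: nat
  assumes Kt: "0 < Kt" and Kr: "0 < Kr" and Mr: "0 < Mr" and Nt: "0 < Nt"
    and NtR: "Nt \<le> Kr * Mr" and kap: "\<kappa> \<le> Kt - 1"
    and low: "(Kt - 1) * Nt \<le> Kr * (Kt - \<kappa>) * Mr"
    and up: "Kr * (Kt - \<kappa>) * Mr < Kt * Nt"
    and d0: "0 < d" and dle: "d \<le> Kt * Nt - Kr * (Kt - \<kappa>) * Mr"
begin

abbreviation "R \<equiv> Kr * Mr"
abbreviation "m \<equiv> Kt - \<kappa>"

definition xk :: "nat \<Rightarrow> complex" where "xk k = of_nat k"

definition bigM :: "(nat \<times> nat \<times> nat \<times> nat \<Rightarrow> complex) \<Rightarrow> complex mat" where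
  "bigM w = mat (m * R) (Kt * Nt) (\<lambda>(r, c). xk (c div Nt) ^ (r div R) *
      w (r mod R div Mr, c div Nt, r mod R mod Mr, c mod Nt))"

definition augM :: "nat \<Rightarrow> (nat \<times> nat \<times> nat \<times> nat \<Rightarrow> complex) \<Rightarrow> complex mat" where
  "augM k0 w = mat (m * R + Nt) (Kt * Nt) (\<lambda>(r, c). if r < m * R then bigM w $$ (r, c)
      else if c = k0 * Nt + (r - m * R) then 1 else 0)"

definition gram :: "nat \<Rightarrow> (nat \<times> nat \<times> nat \<times> nat \<Rightarrow> complex) \<Rightarrow> complex" where
  "gram k0 w = det (transpose_mat (augM k0 w) * augM k0 w)"

lemma bigM_carrier[simp]: "bigM w \<in> carrier_mat (m * R) (Kt * Nt)"
  unfolding bigM_def by auto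

lemma augM_carrier[simp]: "augM k0 w \<in> carrier_mat (m * R + Nt) (Kt * Nt)"
  unfolding augM_def by auto

lemma bigM_rel:
  assumes v: "v \<in> carrier_vec (Kt * Nt)" and l: "l < m" and j: "j < Kr" and i: "i < Mr"
  shows "l * R + (j * Mr + i) < m * R"
    "(bigM w *\<^sub>v v) $ (l * R + (j * Mr + i)) = (\<Sum>k<Kt. xk k ^ l * (\<Sum>s<Nt. w (j, k, i, s) * v $ (k * Nt + s)))"
proof -
  have "j * Mr + i < Suc j * Mr" using i by simp
  also have "\<dots> \<le> Kr * Mr" using j by (intro mult_le_mono1) simp
  finally have jm: "j * Mr + i < R" .
  show r: "l * R + (j * Mr + i) < m * R"
  proof -
    have "l * R + (j * Mr + i) < l * R + R" using jm by simp
    also have "\<dots> = Suc l * R" by simp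
    also have "\<dots> \<le> m * R" using l by (intro mult_le_mono1) simp
    finally show ?thesis .
  qed
  note sp = idx_split[OF j i, of l]
  have "(bigM w *\<^sub>v v) $ (l * R + (j * Mr + i)) = (\<Sum>t<Kt * Nt. bigM w $$ (l * R + (j * Mr + i), t) * v $ t)"
    by (rule mv_index[OF bigM_carrier v r])
  also have "\<dots> = (\<Sum>k<Kt. \<Sum>s<Nt. bigM w $$ (l * R + (j * Mr + i), k * Nt + s) * v $ (k * Nt + s))"
    by (rule sum_blocks)
  also have "\<dots> = (\<Sum>k<Kt. \<Sum>s<Nt. xk k ^ l * (w (j, k, i, s) * v $ (k * Nt + s)))"
  proof (intro sum.cong refl)
    fix k s assume k: "k \<in> {..<Kt}" and s: "s \<in> {..<Nt}"
    have "k * Nt + s < Kt * Nt"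
    proof -
      have "k * Nt + s < k * Nt + Nt" using s by simp
      also have "\<dots> = Suc k * Nt" by simp
      also have "\<dots> \<le> Kt * Nt" using k by (intro mult_le_mono1) simp
      finally show ?thesis .
    qed
    then show "bigM w $$ (l * R + (j * Mr + i), k * Nt + s) * v $ (k * Nt + s) = xk k ^ l * (w (j, k, i, s) * v $ (k * Nt + s))"
      unfolding bigM_def using r sp idx_split2[of s Nt k] s by simp
  qed
  also have "\<dots> = (\<Sum>k<Kt. xk k ^ l * (\<Sum>s<Nt. w (j, k, i, s) * v $ (k * Nt + s)))"
    by (simp add: sum_distrib_left)
  finally show "(bigM w *\<^sub>v v) $ (l * R + (j * Mr + i)) = (\<Sum>k<Kt. xk k ^ l * (\<Sum>s<Nt. w (j, k, i, s) * v $ (k * Nt + s)))" .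
qed

lemma augM_index:
  assumes v: "v \<in> carrier_vec (Kt * Nt)" and k0: "k0 < Kt" and r: "r < m * R + Nt"
  shows "(augM k0 w *\<^sub>v v) $ r = (if r < m * R then (bigM w *\<^sub>v v) $ r else v $ (k0 * Nt + (r - m * R)))"
proof (cases "r < m * R")
  case True
  then show ?thesis
    using mv_index[OF augM_carrier v r] mv_index[OF bigM_carrier v True]
    unfolding augM_def by (auto intro!: sum.cong)
next
  case False
  have lt: "k0 * Nt + (r - m * R) < Kt * Nt"
  proof -
    have "k0 * Nt + (r - m * R) < k0 * Nt + Nt" using r False by simp
    also have "\<dots> = Suc k0 * Nt" by simp
    also have "\<dots> \<le> Kt * Nt" using k0 by (intro mult_le_mono1) simp
    finally show ?thesis .
  qed
  have "(augM k0 w *\<^sub>v v) $ r = (\<Sum>c<Kt * Nt. (if c = k0 * Nt + (r - m * R) then 1 else 0) * v $ c)"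
    using mv_index[OF augM_carrier v r] False r unfolding augM_def by (auto intro!: sum.cong)
  also have "\<dots> = (\<Sum>c<Kt * Nt. if c = k0 * Nt + (r - m * R) then v $ c else 0)"
    by (intro sum.cong) auto
  also have "\<dots> = v $ (k0 * Nt + (r - m * R))" using lt by simp
  finally show ?thesis using False by simp
qed

lemma aug_inj:
  assumes g: "gram k0 w \<noteq> 0" and k0: "k0 < Kt" and v: "v \<in> carrier_vec (Kt * Nt)"
    and Mv: "bigM w *\<^sub>v v = 0\<^sub>v (m * R)" and blk: "\<And>s. s < Nt \<Longrightarrow> v $ (k0 * Nt + s) = 0"
  shows "v = 0\<^sub>v (Kt * Nt)"
proof -
  have Av: "augM k0 w *\<^sub>v v = 0\<^sub>v (m * R + Nt)"
  proof (rule eq_vecI)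
    fix r assume "r < dim_vec (0\<^sub>v (m * R + Nt))"
    then have r: "r < m * R + Nt" by simp
    show "(augM k0 w *\<^sub>v v) $ r = 0\<^sub>v (m * R + Nt) $ r"
    proof (cases "r < m * R")
      case True then show ?thesis unfolding augM_index[OF v k0 r] using Mv r by simp
    next
      case False
      then have "r - m * R < Nt" using r by linarith
      then have "v $ (k0 * Nt + (r - m * R)) = 0" by (rule blk)
      then show ?thesis unfolding augM_index[OF v k0 r] using False r by (simp del: Nat.add_diff_assoc)
    qed
  qed (simp add: augM_def)
  have G: "transpose_mat (augM k0 w) * augM k0 w \<in> carrier_mat (Kt * Nt) (Kt * Nt)"
    by (rule mult_carrier_mat[of _ _ "m * R + Nt"]) auto
  have "(transpose_mat (augM k0 w) * augM k0 w) *\<^sub>v v = 0\<^sub>v (Kt * Nt)"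
    using Av v mult_zero_vec_right[of "transpose_mat (augM k0 w)" "Kt*Nt" "m*R+Nt"]
    by (subst assoc_mult_mat_vec[of _ "Kt*Nt" "m*R+Nt" _ "Kt*Nt"]) auto
  then show ?thesis using g det_0_iff_vec_prod_zero[OF G] v unfolding gram_def by blast
qed

end

context prob
begin

lemma augM_dims[simp]: "dim_row (augM k0 w) = m * R + Nt" "dim_col (augM k0 w) = Kt * Nt"
  unfolding augM_def by auto

lemma bigM_dims[simp]: "dim_row (bigM w) = m * R" "dim_col (bigM w) = Kt * Nt"
  unfolding bigM_def by auto

lemma pf_augM_entry:
  assumes r: "r < m * R + Nt" and c: "c < Kt * Nt"
  shows "polyfun (chan_idx Kr Kt Mr Nt) (\<lambda>w. augM k0 w $$ (r, c))"
proof (cases "r < m * R")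
  case True
  have "r mod R < Kr * Mr" using Kr Mr by simp
  then have j: "r mod R div Mr < Kr" by (simp add: less_mult_imp_div_less)
  have k: "c div Nt < Kt" using c by (simp add: less_mult_imp_div_less)
  have i: "r mod R mod Mr < Mr" using Mr by simp
  have s: "c mod Nt < Nt" using Nt by simp
  have idx: "(r mod R div Mr, c div Nt, r mod R mod Mr, c mod Nt) \<in> chan_idx Kr Kt Mr Nt"
    unfolding chan_idx_def using j k i s by auto
  have "polyfun (chan_idx Kr Kt Mr Nt) (\<lambda>w. xk (c div Nt) ^ (r div R) * w (r mod R div Mr, c div Nt, r mod R mod Mr, c mod Nt))"
    by (intro pf_mult pf_const pf_var idx)
  then show ?thesis using True r c unfolding augM_def bigM_def by simp
next
  case False
  then show ?thesis using r c unfolding augM_def by (simp add: pf_const)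
qed

lemma pf_gram: "polyfun (chan_idx Kr Kt Mr Nt) (gram k0)"
proof -
  have "polyfun (chan_idx Kr Kt Mr Nt) (\<lambda>w. det (transpose_mat (augM k0 w) * augM k0 w))"
  proof (rule pf_det[where n = "Kt * Nt"])
    fix w show "transpose_mat (augM k0 w) * augM k0 w \<in> carrier_mat (Kt * Nt) (Kt * Nt)"
      by (rule mult_carrier_mat[of _ _ "m * R + Nt"]) auto
  next
    fix a b assume a: "a < Kt * Nt" and b: "b < Kt * Nt"
    have e: "(transpose_mat (augM k0 w) * augM k0 w) $$ (a, b) = (\<Sum>r<m * R + Nt. augM k0 w $$ (r, a) * augM k0 w $$ (r, b))" for w
      using mm_index[of "transpose_mat (augM k0 w)" "Kt * Nt" "m * R + Nt" "augM k0 w" "Kt * Nt" a b] a b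
      by (auto intro!: sum.cong)
    show "polyfun (chan_idx Kr Kt Mr Nt) (\<lambda>w. (transpose_mat (augM k0 w) * augM k0 w) $$ (a, b))"
      unfolding e by (intro pf_sum pf_mult pf_augM_entry a b) auto
  qed
  then show ?thesis unfolding gram_def .
qed

end

lemma modeq_small:
  fixes a s s' R :: nat
  assumes "(a + s) mod R = (a + s') mod R" "s < R" "s' < R"
  shows "s = s'"
proof -
  have *: "x = y" if h: "(a + x) mod R = (a + y) mod R" "x < R" "y < R" "x \<le> y" for x y :: nat
  proof -
    have "R dvd (a + y) - (a + x)" using mod_eq_dvd_iff_nat[of "a + x" "a + y" R] h by simp
    then have "R dvd y - x" by simp
    moreover have "y - x < R" using h by simp
    ultimately have "y - x = 0" by (metis dvd_imp_le not_less neq0_conv)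
    then show ?thesis using h by simp
  qed
  show ?thesis
  proof (cases "s \<le> s'")
    case True then show ?thesis using * assms by blast
  next
    case False then show ?thesis using *[of s' s] assms by simp
  qed
qed

context prob
begin

lemma xk_inj: "inj_on xk T"
  unfolding inj_on_def xk_def by simp

lemma witness:
  assumes k0: "k0 < Kt"
  shows "\<exists>w0. gram k0 w0 \<noteq> 0"
proof -
  define pos where "pos k = (if k < k0 then k else k - 1)" for k
  define w0 :: "nat \<times> nat \<times> nat \<times> nat \<Rightarrow> complex" where
    "w0 = (\<lambda>(j, k, i, s). if k \<noteq> k0 \<and> (pos k * Nt + s) mod R = j * Mr + i then 1 else 0)"
  have R0: "0 < R" using Kr Mr by simp
  have pos_le: "Suc (pos k) \<le> Kt - 1" if "k < Kt" "k \<noteq> k0" for k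
    using that k0 unfolding pos_def by auto
  have pos_inj: "pos a = pos b \<Longrightarrow> a \<noteq> k0 \<Longrightarrow> b \<noteq> k0 \<Longrightarrow> a = b" for a b
    unfolding pos_def by (auto split: if_splits)
  have mR: "Kr * (Kt - \<kappa>) * Mr = m * R" by (simp add: mult_ac)
  have inj: "v = 0\<^sub>v (Kt * Nt)" if v: "v \<in> carrier_vec (Kt * Nt)" and Av: "augM k0 w0 *\<^sub>v v = 0\<^sub>v (m * R + Nt)" for v
  proof -
    have Mv: "bigM w0 *\<^sub>v v = 0\<^sub>v (m * R)"
    proof (rule eq_vecI)
      fix r assume "r < dim_vec (0\<^sub>v (m * R))"
      then have r: "r < m * R" by simp
      then have r': "r < m * R + Nt" by simp
      have "(augM k0 w0 *\<^sub>v v) $ r = 0" using Av r' by simp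
      then show "(bigM w0 *\<^sub>v v) $ r = 0\<^sub>v (m * R) $ r" using augM_index[OF v k0 r'] r by simp
    qed simp
    have blk: "v $ (k0 * Nt + s) = 0" if s: "s < Nt" for s
    proof -
      have r': "m * R + s < m * R + Nt" using s by simp
      have "(augM k0 w0 *\<^sub>v v) $ (m * R + s) = 0" using Av r' by simp
      then show ?thesis using augM_index[OF v k0 r'] by simp
    qed
    have "v $ t = 0" if t: "t < Kt * Nt" for t
    proof -
      define k where "k = t div Nt"
      define s where "s = t mod Nt"
      have tks: "t = k * Nt + s" unfolding k_def s_def by simp
      have kK: "k < Kt" unfolding k_def using t by (simp add: less_mult_imp_div_less)
      have sN: "s < Nt" unfolding s_def using Nt by simp
      show ?thesis
      proof (cases "k = k0")
        case True then show ?thesis using blk[OF sN] tks by simp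
      next
        case False
        define r where "r = (pos k * Nt + s) mod R"
        define j where "j = r div Mr"
        define i where "i = r mod Mr"
        have rR: "r < R" unfolding r_def using R0 by simp
        have jK: "j < Kr" unfolding j_def using rR by (simp add: less_mult_imp_div_less)
        have iM: "i < Mr" unfolding i_def using Mr by simp
        have jir: "j * Mr + i = r" unfolding j_def i_def by simp
        define c where "c k' = (\<Sum>s'<Nt. w0 (j, k', i, s') * v $ (k' * Nt + s'))" for k'
        have rel: "(\<Sum>k'\<in>{..<Kt}. xk k' ^ l * c k') = 0" if l: "l < m" for l
        proof -
          have "(bigM w0 *\<^sub>v v) $ (l * R + (j * Mr + i)) = 0"
            using Mv bigM_rel(1)[OF v l jK iM] by simp
          then show ?thesis using bigM_rel(2)[OF v l jK iM, of w0] unfolding c_def by simp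
        qed
        define T where "T = {k'. k' < Kt \<and> k' \<noteq> k0 \<and> (\<exists>s'<Nt. (pos k' * Nt + s') mod R = r)}"
        have TK: "T \<subseteq> {..<Kt}" unfolding T_def by auto
        have fT: "finite T" using TK finite_subset by blast
        have kT: "k \<in> T" unfolding T_def using kK False sN r_def by auto
        have cz: "c k' = 0" if "k' \<in> {..<Kt} - T" for k'
        proof -
          have "w0 (j, k', i, s') = 0" if "s' < Nt" for s'
            using \<open>k' \<in> {..<Kt} - T\<close> that jir unfolding w0_def T_def by auto
          then show ?thesis unfolding c_def by (intro sum.neutral) auto
        qed
        define sel where "sel k' = (SOME s'. s' < Nt \<and> (pos k' * Nt + s') mod R = r)" for k'
        have sel: "sel k' < Nt \<and> (pos k' * Nt + sel k') mod R = r" if "k' \<in> T" for k'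
        proof -
          from that obtain s' where "s' < Nt \<and> (pos k' * Nt + s') mod R = r" unfolding T_def by blast
          then show ?thesis unfolding sel_def by (rule someI)
        qed
        define \<phi> where "\<phi> k' = (pos k' * Nt + sel k') div R" for k'
        have \<phi>m: "\<phi> k' \<in> {..<m}" if kT': "k' \<in> T" for k'
        proof -
          have k'K: "k' < Kt" "k' \<noteq> k0" using kT' unfolding T_def by auto
          have "pos k' * Nt + sel k' < pos k' * Nt + Nt" using sel[OF kT'] by simp
          also have "\<dots> = Suc (pos k') * Nt" by simp
          also have "\<dots> \<le> (Kt - 1) * Nt" by (rule mult_le_mono1) (rule pos_le[OF k'K])
          also have "\<dots> \<le> m * R" using low mR by simp
          finally show ?thesis unfolding \<phi>_def by (simp add: less_mult_imp_div_less)
        qed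
        have \<phi>inj: "inj_on \<phi> T"
        proof (rule inj_onI)
          fix a b assume a: "a \<in> T" and b: "b \<in> T" and e: "\<phi> a = \<phi> b"
          have "pos a * Nt + sel a = \<phi> a * R + r"
            using sel[OF a] unfolding \<phi>_def by (metis div_mult_mod_eq)
          moreover have "pos b * Nt + sel b = \<phi> b * R + r"
            using sel[OF b] unfolding \<phi>_def by (metis div_mult_mod_eq)
          ultimately have pe: "pos a * Nt + sel a = pos b * Nt + sel b" using e by simp
          have "pos a = (pos a * Nt + sel a) div Nt" using sel[OF a] by simp
          also have "\<dots> = (pos b * Nt + sel b) div Nt" using pe by simp
          also have "\<dots> = pos b" using sel[OF b] by simp
          finally show "a = b" using pos_inj a b unfolding T_def by auto
        qed
        have cT: "card T \<le> m"
          using card_inj_on_le[OF \<phi>inj _ finite_lessThan, of m] \<phi>m by auto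
        have le: "poly (lag T k xk) (xk k) * c k + (\<Sum>k'\<in>{..<Kt}-T. poly (lag T k xk) (xk k') * c k') = 0"
          by (rule lagrange_elim[OF rel fT kT cT TK finite_lessThan xk_inj])
        then have "poly (lag T k xk) (xk k) * c k = 0" using cz by simp
        then have ck: "c k = 0" using lag_nz[OF fT xk_inj kT] by simp
        have "w0 (j, k, i, s') = (if s' = s then 1 else 0)" if s': "s' < Nt" for s'
        proof -
          have "(pos k * Nt + s') mod R = r \<longleftrightarrow> s' = s"
          proof
            assume "(pos k * Nt + s') mod R = r"
            then show "s' = s" using modeq_small[of "pos k * Nt" s' R s] s' sN NtR r_def by simp
          qed (simp add: r_def)
          then show ?thesis unfolding w0_def using False jir by simp
        qed
        then have "c k = (\<Sum>s'<Nt. if s' = s then v $ (k * Nt + s') else 0)"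
          unfolding c_def by (intro sum.cong) auto
        also have "\<dots> = v $ t" using sN tks by simp
        finally show ?thesis using ck by simp
      qed
    qed
    then show ?thesis using v by (intro eq_vecI) auto
  qed
  have re: "cnj (augM k0 w0 $$ (r, c)) = augM k0 w0 $$ (r, c)" if "r < m * R + Nt" "c < Kt * Nt" for r c
    using that unfolding augM_def bigM_def w0_def xk_def by (auto split: prod.splits)
  have "gram k0 w0 \<noteq> 0" unfolding gram_def
    by (rule gram_real_nz[OF augM_carrier re inj])
  then show ?thesis by blast
qed

end

context prob
begin

lemma construct:
  assumes g: "\<And>k. k < Kt \<Longrightarrow> gram k w \<noteq> 0"
  shows "\<exists>V :: nat \<Rightarrow> complex mat.
             (\<forall>k<Kt. V k \<in> carrier_mat Nt d \<and> vec_space.rank Nt (V k) = d) \<and>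
             (\<forall>j<Kr. vec_space.rank Mr (hcat Kt d (\<lambda>k. channel Mr Nt w j k * V k)) \<le> \<kappa> * d)"
proof -
  have mR: "Kr * (Kt - \<kappa>) * Mr = m * R" by (simp add: mult_ac)
  have dd: "m * R + d \<le> Kt * Nt" using dle up mR by simp
  obtain b where b1: "\<And>c. c < d \<Longrightarrow> b c \<in> carrier_vec (Kt * Nt) \<and> bigM w *\<^sub>v b c = 0\<^sub>v (m * R)"
    and b2: "\<And>\<alpha>. (\<forall>t<Kt * Nt. (\<Sum>c<d. \<alpha> c * b c $ t) = 0) \<Longrightarrow> (\<forall>c<d. \<alpha> c = 0)"
    using kernel_vecs[OF bigM_carrier dd] by blast
  define V where "V k = mat Nt d (\<lambda>(s, c). b c $ (k * Nt + s))" for k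
  have VC: "V k \<in> carrier_mat Nt d" for k unfolding V_def by auto
  have rk: "vec_space.rank Nt (V k) = d" if k: "k < Kt" for k
  proof (rule vec_space.rank_full[OF VC])
    fix a :: "complex vec" assume a: "a \<in> carrier_vec d" and Va: "V k *\<^sub>v a = 0\<^sub>v Nt"
    define u where "u = vec (Kt * Nt) (\<lambda>t. \<Sum>c<d. a $ c * b c $ t)"
    have uc: "u \<in> carrier_vec (Kt * Nt)" unfolding u_def by simp
    have Mu: "bigM w *\<^sub>v u = 0\<^sub>v (m * R)"
    proof (rule eq_vecI)
      fix r assume "r < dim_vec (0\<^sub>v (m * R))"
      then have r: "r < m * R" by simp
      have "(bigM w *\<^sub>v u) $ r = (\<Sum>t<Kt * Nt. bigM w $$ (r, t) * (\<Sum>c<d. a $ c * b c $ t))"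
        using mv_index[OF bigM_carrier uc r] unfolding u_def by simp
      also have "\<dots> = (\<Sum>c<d. a $ c * (\<Sum>t<Kt * Nt. bigM w $$ (r, t) * b c $ t))"
      proof -
        have "(\<Sum>t<Kt * Nt. bigM w $$ (r, t) * (\<Sum>c<d. a $ c * b c $ t)) = (\<Sum>t<Kt * Nt. \<Sum>c<d. a $ c * (bigM w $$ (r, t) * b c $ t))"
          by (simp add: sum_distrib_left mult_ac)
        also have "\<dots> = (\<Sum>c<d. \<Sum>t<Kt * Nt. a $ c * (bigM w $$ (r, t) * b c $ t))"
          by (rule sum.swap)
        also have "\<dots> = (\<Sum>c<d. a $ c * (\<Sum>t<Kt * Nt. bigM w $$ (r, t) * b c $ t))"
          by (simp add: sum_distrib_left)
        finally show ?thesis .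
      qed
      also have "\<dots> = (\<Sum>c<d. a $ c * (bigM w *\<^sub>v b c) $ r)"
      proof (intro sum.cong refl)
        fix c assume "c \<in> {..<d}"
        then have "b c \<in> carrier_vec (Kt * Nt)" using b1 by auto
        then show "a $ c * (\<Sum>t<Kt * Nt. bigM w $$ (r, t) * b c $ t) = a $ c * (bigM w *\<^sub>v b c) $ r"
          using mv_index[OF bigM_carrier _ r] by simp
      qed
      also have "\<dots> = 0" using b1 r by (intro sum.neutral) auto
      finally show "(bigM w *\<^sub>v u) $ r = 0\<^sub>v (m * R) $ r" using r by simp
    qed simp
    have blk: "u $ (k * Nt + s) = 0" if s: "s < Nt" for s
    proof -
      have lt: "k * Nt + s < Kt * Nt"
      proof -
        have "k * Nt + s < Suc k * Nt" using s by simp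
        also have "\<dots> \<le> Kt * Nt" using k by (intro mult_le_mono1) simp
        finally show ?thesis .
      qed
      have "(V k *\<^sub>v a) $ s = (\<Sum>c<d. V k $$ (s, c) * a $ c)" by (rule mv_index[OF VC a s])
      also have "\<dots> = (\<Sum>c<d. a $ c * b c $ (k * Nt + s))"
      proof (intro sum.cong refl)
        fix c assume "c \<in> {..<d}"
        then have "V k $$ (s, c) = b c $ (k * Nt + s)" unfolding V_def using s by simp
        then show "V k $$ (s, c) * a $ c = a $ c * b c $ (k * Nt + s)" by simp
      qed
      also have "\<dots> = u $ (k * Nt + s)" unfolding u_def using lt by simp
      finally show ?thesis using Va s by simp
    qed
    have "u = 0\<^sub>v (Kt * Nt)" by (rule aug_inj[OF g[OF k] k uc Mu blk])
    then have "\<forall>t<Kt * Nt. (\<Sum>c<d. a $ c * b c $ t) = 0"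
    proof (intro allI impI)
      fix t assume u0: "u = 0\<^sub>v (Kt * Nt)" and t: "t < Kt * Nt"
      have "u $ t = 0" using u0 t by simp
      then show "(\<Sum>c<d. a $ c * b c $ t) = 0" using t unfolding u_def by simp
    qed
    then have "\<forall>c<d. a $ c = 0" by (rule b2)
    then show "a = 0\<^sub>v d" using a by (intro eq_vecI) auto
  qed
  define \<beta> where "\<beta> k1 k = (if k1 < \<kappa> then (if k = k1 then 1 else 0)
      else - poly (lag {\<kappa>..<Kt} k1 xk) (xk k) / poly (lag {\<kappa>..<Kt} k1 xk) (xk k1))" for k1 k
  have comb: "U k1 = (\<Sum>k<\<kappa>. \<beta> k1 k * U k)"
    if rel: "\<And>l. l < m \<Longrightarrow> (\<Sum>k\<in>{..<Kt}. xk k ^ l * U k) = 0" and k1: "k1 < Kt" for U :: "nat \<Rightarrow> complex" and k1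
  proof (cases "k1 < \<kappa>")
    case True
    have "(\<Sum>k<\<kappa>. \<beta> k1 k * U k) = (\<Sum>k<\<kappa>. if k = k1 then U k else 0)"
      unfolding \<beta>_def using True by (intro sum.cong) auto
    then show ?thesis using True by simp
  next
    case False
    let ?L = "lag {\<kappa>..<Kt} k1 xk"
    have T: "k1 \<in> {\<kappa>..<Kt}" using False k1 by simp
    have le: "poly ?L (xk k1) * U k1 + (\<Sum>k\<in>{..<Kt} - {\<kappa>..<Kt}. poly ?L (xk k) * U k) = 0"
      by (rule lagrange_elim[OF rel finite_atLeastLessThan T]) (auto simp: xk_inj)
    have eqs: "{..<Kt} - {\<kappa>..<Kt} = {..<\<kappa>}" using kap Kt by auto
    have nz: "poly ?L (xk k1) \<noteq> 0" by (rule lag_nz[OF finite_atLeastLessThan xk_inj T])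
    have e1: "poly ?L (xk k1) * U k1 = - (\<Sum>k<\<kappa>. poly ?L (xk k) * U k)"
      using le unfolding eqs add_eq_0_iff2 .
    have e2: "U k1 = - (\<Sum>k<\<kappa>. poly ?L (xk k) * U k) / poly ?L (xk k1)"
    proof -
      have "U k1 = (poly ?L (xk k1) * U k1) / poly ?L (xk k1)" using nz by simp
      then show ?thesis unfolding e1 .
    qed
    have "(\<Sum>k<\<kappa>. \<beta> k1 k * U k) = (\<Sum>k<\<kappa>. - (poly ?L (xk k) * U k) / poly ?L (xk k1))"
      unfolding \<beta>_def using False by (intro sum.cong) auto
    also have "\<dots> = - (\<Sum>k<\<kappa>. poly ?L (xk k) * U k) / poly ?L (xk k1)"
      by (simp add: sum_divide_distrib[symmetric] sum_negf)
    finally show ?thesis using e2 by simp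
  qed
  have hc: "vec_space.rank Mr (hcat Kt d (\<lambda>k. channel Mr Nt w j k * V k)) \<le> \<kappa> * d" if j: "j < Kr" for j
  proof -
    define B where "B k = channel Mr Nt w j k * V k" for k
    have chC: "channel Mr Nt w j k \<in> carrier_mat Mr Nt" for k unfolding channel_def by auto
    have BC: "B k \<in> carrier_mat Mr d" for k unfolding B_def using chC VC by (rule mult_carrier_mat)
    have U: "B k $$ (i, c) = (\<Sum>s<Nt. w (j, k, i, s) * b c $ (k * Nt + s))" if "i < Mr" "c < d" for k i c
      using mm_index[OF chC VC that] that unfolding B_def channel_def V_def by (auto intro!: sum.cong)
    have relB: "(\<Sum>k\<in>{..<Kt}. xk k ^ l * B k $$ (i, c)) = 0" if "c < d" "i < Mr" "l < m" for c i l
    proof -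
      have "(bigM w *\<^sub>v b c) $ (l * R + (j * Mr + i)) = 0"
        using b1[OF that(1)] bigM_rel(1)[OF _ that(3) j that(2), of "b c"] by simp
      then show ?thesis using bigM_rel(2)[OF _ that(3) j that(2), of "b c" w] b1[OF that(1)] U[OF that(2,1)] by simp
    qed
    have combB: "B k1 $$ (i, c) = (\<Sum>k<\<kappa>. \<beta> k1 k * B k $$ (i, c))" if "c < d" "i < Mr" "k1 < Kt" for c i k1
      by (rule comb[of "\<lambda>k. B k $$ (i, c)"]) (use relB that in auto)
    have dimB: "dim_row (B 0) = Mr" using BC[of 0] by simp
    have HC: "hcat Kt d B \<in> carrier_mat Mr (Kt * d)" unfolding hcat_def dimB by simp
    have PC: "hcat \<kappa> d B \<in> carrier_mat Mr (\<kappa> * d)" unfolding hcat_def dimB by simp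
    have "vec_space.rank Mr (hcat Kt d B) \<le> vec_space.rank Mr (hcat \<kappa> d B)"
    proof (rule vec_space.rank_le_colspace[OF HC PC])
      fix q assume q: "q < Kt * d"
      define x :: "complex vec" where "x = vec (\<kappa> * d) (\<lambda>q'. if q' mod d = q mod d then \<beta> (q div d) (q' div d) else 0)"
      have xc: "x \<in> carrier_vec (\<kappa> * d)" unfolding x_def by simp
      have qd: "q div d < Kt" "q mod d < d" using q d0 by (auto simp: less_mult_imp_div_less)
      have "hcat \<kappa> d B *\<^sub>v x = col (hcat Kt d B) q"
      proof (rule eq_vecI)
        fix i assume "i < dim_vec (col (hcat Kt d B) q)"
        then have i: "i < Mr" using HC by simp
        have "(hcat \<kappa> d B *\<^sub>v x) $ i = (\<Sum>q'<\<kappa> * d. hcat \<kappa> d B $$ (i, q') * x $ q')"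
          by (rule mv_index[OF PC xc i])
        also have "\<dots> = (\<Sum>k<\<kappa>. \<Sum>c<d. hcat \<kappa> d B $$ (i, k * d + c) * x $ (k * d + c))"
          by (rule sum_blocks)
        also have "\<dots> = (\<Sum>k<\<kappa>. \<Sum>c<d. if c = q mod d then \<beta> (q div d) k * B k $$ (i, c) else 0)"
        proof (intro sum.cong refl)
          fix k c assume k: "k \<in> {..<\<kappa>}" and c: "c \<in> {..<d}"
          have lt: "k * d + c < \<kappa> * d"
          proof -
            have "k * d + c < Suc k * d" using c by simp
            also have "\<dots> \<le> \<kappa> * d" using k by (intro mult_le_mono1) simp
            finally show ?thesis .
          qed
          have dv: "(k * d + c) div d = k" "(k * d + c) mod d = c" using c by auto
          show "hcat \<kappa> d B $$ (i, k * d + c) * x $ (k * d + c) = (if c = q mod d then \<beta> (q div d) k * B k $$ (i, c) else 0)"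
          proof -
            have xe: "x $ (k * d + c) = (if c = q mod d then \<beta> (q div d) k else 0)"
              unfolding x_def index_vec[OF lt] dv by simp
            have he: "hcat \<kappa> d B $$ (i, k * d + c) = B k $$ (i, c)"
              unfolding hcat_def dimB index_mat(1)[OF i lt] using dv by simp
            show ?thesis unfolding xe he by simp
          qed
        qed
        also have "\<dots> = (\<Sum>k<\<kappa>. \<beta> (q div d) k * B k $$ (i, q mod d))"
          using qd by simp
        also have "\<dots> = B (q div d) $$ (i, q mod d)"
          by (rule combB[OF qd(2) i qd(1), symmetric])
        also have "\<dots> = col (hcat Kt d B) q $ i"
          unfolding hcat_def dimB using i q by simp
        finally show "(hcat \<kappa> d B *\<^sub>v x) $ i = col (hcat Kt d B) q $ i" .
      qed (use PC HC in simp)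
      then show "\<exists>x\<in>carrier_vec (\<kappa> * d). hcat \<kappa> d B *\<^sub>v x = col (hcat Kt d B) q" using xc by blast
    qed
    also have "\<dots> \<le> \<kappa> * d" by (rule vec_space.rank_le_nc[OF PC])
    finally show ?thesis unfolding B_def .
  qed
  show ?thesis by (intro exI[of _ V] conjI allI impI) (use VC rk hc in auto)
qed

end

theorem proposition1:
  fixes Kt Kr Mr Nt \<kappa> d :: nat
  assumes "0 < Kt" and "0 < Kr" and "0 < Mr" and "0 < Nt"
    and "Nt \<le> Kr * Mr"
    and "\<kappa> \<le> Kt - 1"
    and "(Kt - 1) * Nt \<le> Kr * (Kt - \<kappa>) * Mr"
    and "Kr * (Kt - \<kappa>) * Mr < Kt * Nt"
    and "0 < d"
    and "d \<le> Kt * Nt - Kr * (Kt - \<kappa>) * Mr"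
  shows "AE w in channel_measure Kr Kt Mr Nt.
           \<exists>V :: nat \<Rightarrow> complex mat.
             (\<forall>k<Kt. V k \<in> carrier_mat Nt d \<and> vec_space.rank Nt (V k) = d) \<and>
             (\<forall>j<Kr. vec_space.rank Mr (hcat Kt d (\<lambda>k. channel Mr Nt w j k * V k)) \<le> \<kappa> * d)"
proof -
  interpret prob Kt Kr Mr Nt \<kappa> d
    by unfold_locales (use assms in auto)
  have fin: "finite (chan_idx Kr Kt Mr Nt)" unfolding chan_idx_def by auto
  have ae: "AE w in channel_measure Kr Kt Mr Nt. \<forall>k\<in>{..<Kt}. gram k w \<noteq> 0"
  proof (rule AE_finite_allI)
    show "finite {..<Kt}" by simp
    fix k assume "k \<in> {..<Kt}"
    then obtain w0 where "gram k w0 \<noteq> 0" using witness by auto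
    then show "AE w in channel_measure Kr Kt Mr Nt. gram k w \<noteq> 0"
      unfolding channel_measure_def by (rule pf_AE[OF fin pf_gram])
  qed
  show ?thesis
  proof (rule eventually_mono[OF ae])
    fix w assume "\<forall>k\<in>{..<Kt}. gram k w \<noteq> 0"
    then show "\<exists>V :: nat \<Rightarrow> complex mat.
             (\<forall>k<Kt. V k \<in> carrier_mat Nt d \<and> vec_space.rank Nt (V k) = d) \<and>
             (\<forall>j<Kr. vec_space.rank Mr (hcat Kt d (\<lambda>k. channel Mr Nt w j k * V k)) \<le> \<kappa> * d)"
      by (intro construct) auto
  qed
qed

end
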